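(* Let $0<p=q<1/2$, $0<\theta<1$ and $\varepsilon>0$. For $d>0$ and $\alpha\in(p,\ e^{-d}+p-2e^{-d}p)$ let \[ b_1(\alpha,d)=\frac{\theta}{1-\theta}\frac{1}{d\,D_{\mathrm{KL}}(\alpha\|p)},\qquad b_2(\alpha,d)=\frac{1}{1-\theta}\frac{1}{d\,D_{\mathrm{KL}}(\alpha\|e^{-d}+p-2e^{-d}p)}, \] and $m_{\mathrm{COMP},\mathrm{BSC}}=\min_{\alpha,d}\max\{b_1(\alpha,d),b_2(\alpha,d)\}\,k\log(n/k)$. If $m>(1+\varepsilon)m_{\mathrm{COMP},\mathrm{BSC}}$, then (with parameters chosen suitably) noisy COMP recovers $\sigma$ with high probability given $G$ and $\hat\sigma$.
   Context: Noisy group testing model (binary symmetric channel): $n$ individuals, $k\sim n^{\theta}$ infected; $\sigma\in\{0,1\}^n$ uniformly random of Hamming weight $k$. Constant-column design $G$: $m=ck\log(n/k)$ tests, each individual independently assigned to exactly $\Delta=cd\log(n/k)$ distinct tests chosen uniformly at random. A test is truly positive iff it contains an infected individual. Displayed results $\hat\sigma$: independently, each test's true result is flipped with probability $p$ (truly negative displayed positive with probability $p$, truly positive displayed negative with probability $q=p$). Noisy COMP with threshold $\alpha$: declare healthy every individual appearing in at least $\alpha\Delta$ displayed negative tests, the rest infected. $\log$ natural; $D_{\mathrm{KL}}(r\|s)=r\log(r/s)+(1-r)\log\frac{1-r}{1-s}$. "With high probability": probability $\to1$ as $n\to\infty$. *)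

theory Defs
  imports "HOL-Probability.Probability" "HOL-Library.Landau_Symbols"
begin

definition DKL :: "real \<Rightarrow> real \<Rightarrow> real" where
  "DKL r s = r * ln (r / s) + (1 - r) * ln ((1 - r) / (1 - s))"

definition b1 :: "real \<Rightarrow> real \<Rightarrow> real \<Rightarrow> real \<Rightarrow> real" where
  "b1 \<theta> p \<alpha> d = \<theta> / (1 - \<theta>) * (1 / (d * DKL \<alpha> p))"

definition b2 :: "real \<Rightarrow> real \<Rightarrow> real \<Rightarrow> real \<Rightarrow> real" where
  "b2 \<theta> p \<alpha> d = 1 / (1 - \<theta>) * (1 / (d * DKL \<alpha> (exp (-d) + p - 2 * exp (-d) * p)))"

definition admissible :: "real \<Rightarrow> real \<Rightarrow> real \<Rightarrow> bool" where
  "admissible p \<alpha> d \<longleftrightarrow> 0 < d \<and> p < \<alpha> \<and> \<alpha> < exp (-d) + p - 2 * exp (-d) * p"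

text \<open>The constant c such that m_COMP,BSC = c * k log(n/k) (infimum over admissible alpha, d).\<close>
definition comp_const :: "real \<Rightarrow> real \<Rightarrow> real" where
  "comp_const \<theta> p = Inf {max (b1 \<theta> p \<alpha> d) (b2 \<theta> p \<alpha> d) | \<alpha> d. admissible p \<alpha> d}"

text \<open>Displayed result of test a (True = positive): true result XOR flip.\<close>
definition displayed :: "nat set \<Rightarrow> (nat \<Rightarrow> nat set) \<Rightarrow> (nat \<Rightarrow> bool) \<Rightarrow> nat \<Rightarrow> bool" where
  "displayed S G F a = ((\<exists>i\<in>S. a \<in> G i) \<noteq> F a)"

definition noisy_comp :: "nat \<Rightarrow> nat \<Rightarrow> real \<Rightarrow> (nat \<Rightarrow> nat set) \<Rightarrow> (nat \<Rightarrow> bool) \<Rightarrow> nat set" where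
  "noisy_comp n \<Delta> \<alpha> G shown =
     {i \<in> {..<n}. \<not> (\<alpha> * real \<Delta> \<le> real (card {a \<in> G i. \<not> shown a}))}"

text \<open>Probability that noisy COMP recovers sigma: n individuals, k infected, m tests,
  each individual in Delta uniformly random distinct tests, each result flipped with prob p.\<close>
definition success_prob :: "nat \<Rightarrow> nat \<Rightarrow> nat \<Rightarrow> nat \<Rightarrow> real \<Rightarrow> real \<Rightarrow> real" where
  "success_prob n k m \<Delta> p \<alpha> =
     measure_pmf.prob
       (pmf_of_set {S. S \<subseteq> {..<n} \<and> card S = k} \<bind> (\<lambda>S.
        Pi_pmf {..<n} {} (\<lambda>_. pmf_of_set {T. T \<subseteq> {..<m} \<and> card T = \<Delta>}) \<bind> (\<lambda>G.
        map_pmf (\<lambda>F. noisy_comp n \<Delta> \<alpha> G (displayed S G F) = S)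
          (Pi_pmf {..<m} False (\<lambda>_. bernoulli_pmf p)))))
       {True}"

end

theory Submission
  imports Defs
begin

lemma sets_split_notin:
  "{U. U \<subseteq> M \<and> card U = D \<and> a \<notin> U} = {U. U \<subseteq> M - {a} \<and> card U = D}"
  by auto

lemma sets_split_in:
  assumes "finite M" "a \<in> M"
  shows "{U. U \<subseteq> M \<and> card U = Suc D \<and> a \<in> U} = insert a ` {U. U \<subseteq> M - {a} \<and> card U = D}"
proof (intro equalityI subsetI)
  fix U assume U: "U \<in> {U. U \<subseteq> M \<and> card U = Suc D \<and> a \<in> U}"
  then have "finite U" using assms finite_subset by blast
  then have "U - {a} \<in> {U. U \<subseteq> M - {a} \<and> card U = D}" using U by auto
  moreover have "U = insert a (U - {a})" using U by auto
  ultimately show "U \<in> insert a ` {U. U \<subseteq> M - {a} \<and> card U = D}" by blast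
next
  fix U assume "U \<in> insert a ` {U. U \<subseteq> M - {a} \<and> card U = D}"
  then obtain V where V: "V \<subseteq> M - {a}" "card V = D" "U = insert a V" by auto
  then have "finite V" using assms finite_subset by (metis finite_Diff)
  moreover have "a \<notin> V" using V by auto
  ultimately show "U \<in> {U. U \<subseteq> M \<and> card U = Suc D \<and> a \<in> U}" using V assms by auto
qed

lemma D1_sum:
  fixes y r :: real and z :: "'a \<Rightarrow> real"
  assumes "finite M" "T \<subseteq> M" "0 \<le> r" "\<forall>a\<in>T. 0 \<le> z a \<and> z a \<le> y"
    "real D \<le> r * (real (card M) - real (card T) + 1)"
  shows "(\<Sum>U\<in>{U. U \<subseteq> M \<and> card U = D}. \<Prod>a\<in>T. if a \<in> U then y else z a)
           \<le> real (card M choose D) * (\<Prod>a\<in>T. r*y + (1-r)*z a)"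
proof -
  have "finite T" using assms finite_subset by blast
  then show ?thesis using assms
  proof (induction T arbitrary: M D rule: finite_induct)
    case empty
    then show ?case by (simp add: n_subsets)
  next
    case (insert a T M D)
    define M' where "M' = M - {a}"
    have aM: "a \<in> M" and TM': "T \<subseteq> M'" using insert.prems(2) insert.hyps by (auto simp: M'_def)
    have finM': "finite M'" using insert.prems(1) by (simp add: M'_def)
    have cM': "card M' = card M - 1" using aM insert.prems(1) by (simp add: M'_def)
    have "card M > 0" using aM insert.prems(1) card_gt_0_iff by blast
    then have cM: "card M \<ge> 1" by simp
    have cT: "card (insert a T) = card T + 1" using insert.hyps by simp
    have zy: "0 \<le> z a" "z a \<le> y" using insert.prems(4) by auto
    have y0: "0 \<le> y" using zy by linarith
    define P where "P = (\<Prod>b\<in>T. r*y + (1-r)*z b)"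
    have fac: "0 \<le> r*y + (1-r)*z b" if "b \<in> T" for b
    proof -
      have "0 \<le> z b" "z b \<le> y" using that insert.prems(4) by auto
      then have "0 \<le> r*(y - z b)" using insert.prems(3) by simp
      then show ?thesis using \<open>0 \<le> z b\<close> by (simp add: algebra_simps)
    qed
    have P0: "0 \<le> P" unfolding P_def using fac by (intro prod_nonneg) auto
    have eqT: "\<And>U. (\<Prod>b\<in>insert a T. if b \<in> U then y else z b) =
        (if a \<in> U then y else z a) * (\<Prod>b\<in>T. if b \<in> U then y else z b)"
      using insert.hyps by simp
    have fin: "finite {U. U \<subseteq> M \<and> card U = D}" using insert by simp
    have split: "{U. U \<subseteq> M \<and> card U = D} = {U. U \<subseteq> M \<and> card U = D \<and> a \<in> U} \<union> {U. U \<subseteq> M \<and> card U = D \<and> a \<notin> U}"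
      by auto
    have S: "(\<Sum>U\<in>{U. U \<subseteq> M \<and> card U = D}. \<Prod>b\<in>insert a T. if b \<in> U then y else z b)
        = (\<Sum>U\<in>{U. U \<subseteq> M \<and> card U = D \<and> a \<in> U}. \<Prod>b\<in>insert a T. if b \<in> U then y else z b)
        + (\<Sum>U\<in>{U. U \<subseteq> M \<and> card U = D \<and> a \<notin> U}. \<Prod>b\<in>insert a T. if b \<in> U then y else z b)"
      by (subst split, rule sum.union_disjoint) (auto intro: finite_subset[OF _ fin])
    have IH2: "(\<Sum>U\<in>{U. U \<subseteq> M' \<and> card U = D}. \<Prod>b\<in>T. if b \<in> U then y else z b)
        \<le> real (card M' choose D) * P"
      unfolding P_def using insert.prems cM' cT cM TM' finM'
      by (intro insert.IH) (auto simp: of_nat_diff)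
    have second: "(\<Sum>U\<in>{U. U \<subseteq> M \<and> card U = D \<and> a \<notin> U}. \<Prod>b\<in>insert a T. if b \<in> U then y else z b)
        \<le> z a * (real (card M' choose D) * P)"
    proof -
      have "(\<Sum>U\<in>{U. U \<subseteq> M \<and> card U = D \<and> a \<notin> U}. \<Prod>b\<in>insert a T. if b \<in> U then y else z b)
          = (\<Sum>U\<in>{U. U \<subseteq> M' \<and> card U = D}. z a * (\<Prod>b\<in>T. if b \<in> U then y else z b))"
        unfolding M'_def sets_split_notin[symmetric] by (intro sum.cong) (auto simp: eqT)
      also have "\<dots> = z a * (\<Sum>U\<in>{U. U \<subseteq> M' \<and> card U = D}. \<Prod>b\<in>T. if b \<in> U then y else z b)"
        by (simp add: sum_distrib_left)
      also have "\<dots> \<le> z a * (real (card M' choose D) * P)"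
        using IH2 zy by (intro mult_left_mono) auto
      finally show ?thesis .
    qed
    show ?case
    proof (cases D)
      case 0
      have E0: "{U. U \<subseteq> M \<and> card U = D \<and> a \<in> U} = {}" using 0 insert.prems
        by (auto dest: finite_subset)
      have "(\<Sum>U\<in>{U. U \<subseteq> M \<and> card U = D \<and> a \<in> U}. \<Prod>b\<in>insert a T. if b \<in> U then y else z b) = 0"
        by (subst E0) simp
      then have "(\<Sum>U\<in>{U. U \<subseteq> M \<and> card U = D}. \<Prod>b\<in>insert a T. if b \<in> U then y else z b)
          \<le> z a * P" using S second 0 by simp
      also have "\<dots> \<le> (r*y + (1-r)*z a) * P"
        using P0 zy insert.prems by (intro mult_right_mono) (auto simp: algebra_simps mult_left_mono)
      finally show ?thesis using 0 insert by (simp add: P_def)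
    next
      case (Suc D')
      have IH1: "(\<Sum>U\<in>{U. U \<subseteq> M' \<and> card U = D'}. \<Prod>b\<in>T. if b \<in> U then y else z b)
          \<le> real (card M' choose D') * P"
        unfolding P_def using insert.prems cM' cT cM TM' finM' Suc
        by (intro insert.IH) (auto simp: of_nat_diff)
      have first: "(\<Sum>U\<in>{U. U \<subseteq> M \<and> card U = D \<and> a \<in> U}. \<Prod>b\<in>insert a T. if b \<in> U then y else z b)
          \<le> y * (real (card M' choose D') * P)"
      proof -
        have inj: "inj_on (insert a) {U. U \<subseteq> M' \<and> card U = D'}"
          unfolding M'_def inj_on_def by blast
        have "(\<Sum>U\<in>{U. U \<subseteq> M \<and> card U = D \<and> a \<in> U}. \<Prod>b\<in>insert a T. if b \<in> U then y else z b)
            = (\<Sum>V\<in>{U. U \<subseteq> M' \<and> card U = D'}. \<Prod>b\<in>insert a T. if b \<in> insert a V then y else z b)"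
          unfolding Suc M'_def sets_split_in[OF insert.prems(1) aM]
          using inj by (subst sum.reindex) (auto simp: M'_def)
        also have "\<dots> = (\<Sum>V\<in>{U. U \<subseteq> M' \<and> card U = D'}. y * (\<Prod>b\<in>T. if b \<in> V then y else z b))"
        proof (intro sum.cong refl)
          fix V assume "V \<in> {U. U \<subseteq> M' \<and> card U = D'}"
          have "(\<Prod>b\<in>T. if b \<in> insert a V then y else z b) = (\<Prod>b\<in>T. if b \<in> V then y else z b)"
            using insert.hyps by (intro prod.cong) auto
          then show "(\<Prod>b\<in>insert a T. if b \<in> insert a V then y else z b) = y * (\<Prod>b\<in>T. if b \<in> V then y else z b)"
            using eqT[of "insert a V"] by simp
        qed
        also have "\<dots> = y * (\<Sum>U\<in>{U. U \<subseteq> M' \<and> card U = D'}. \<Prod>b\<in>T. if b \<in> U then y else z b)"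
          by (simp add: sum_distrib_left)
        also have "\<dots> \<le> y * (real (card M' choose D') * P)"
          using IH1 y0 by (intro mult_left_mono) auto
        finally show ?thesis .
      qed
      have pascal: "card M choose D = (card M' choose D') + (card M' choose D)"
      proof -
        have "card M = Suc (card M')" using cM cM' by simp
        then show ?thesis using Suc by simp
      qed
      have absorb: "real D * (card M choose D) = real (card M) * (card M' choose D')"
      proof -
        have "Suc D' * (card M choose Suc D') = card M * ((card M - 1) choose D')"
          by (rule binomial_absorption)
        then have "D * (card M choose D) = card M * (card M' choose D')" using Suc cM' by simp
        then show ?thesis by (metis of_nat_mult)
      qed
      have DrM: "real D \<le> r * real (card M)"
      proof -
        have "r * (real (card M) - real (card (insert a T)) + 1) \<le> r * real (card M)"
          using insert.prems cT by (intro mult_left_mono) auto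
        then show ?thesis using insert.prems by linarith
      qed
      have key: "real (card M' choose D') \<le> r * real (card M choose D)"
      proof -
        have "real (card M) * real (card M' choose D') = real D * real (card M choose D)"
          using absorb by simp
        also have "\<dots> \<le> r * real (card M) * real (card M choose D)"
          using DrM by (intro mult_right_mono) auto
        finally show ?thesis using cM by (simp add: mult.commute mult.left_commute)
      qed
      have "(\<Sum>U\<in>{U. U \<subseteq> M \<and> card U = D}. \<Prod>b\<in>insert a T. if b \<in> U then y else z b)
          \<le> y * (real (card M' choose D') * P) + z a * (real (card M' choose D) * P)"
        using S first second by linarith
      also have "\<dots> = (z a * real (card M choose D) + (y - z a) * real (card M' choose D')) * P"
        using pascal by (simp add: algebra_simps)
      also have "\<dots> \<le> (z a * real (card M choose D) + (y - z a) * (r * real (card M choose D))) * P"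
        using key zy P0 by (intro mult_right_mono add_left_mono mult_left_mono) auto
      also have "\<dots> = real (card M choose D) * ((r*y + (1-r)*z a) * P)"
        by (simp add: algebra_simps)
      finally show ?thesis using insert by (simp add: P_def)
    qed
  qed
qed

lemma exp_bind_fin:
  fixes h :: "'b \<Rightarrow> real"
  assumes "finite (set_pmf p)" "\<And>x. x \<in> set_pmf p \<Longrightarrow> finite (set_pmf (f x))"
  shows "measure_pmf.expectation (p \<bind> f) h = measure_pmf.expectation p (\<lambda>x. measure_pmf.expectation (f x) h)"
proof -
  have "measure_pmf.expectation (p \<bind> f) h = (\<Sum>a\<in>set_pmf p. pmf p a *\<^sub>R measure_pmf.expectation (f a) h)"
    using assms by (intro pmf_expectation_bind) auto
  also have "\<dots> = measure_pmf.expectation p (\<lambda>x. measure_pmf.expectation (f x) h)"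
    using assms by (intro integral_measure_pmf[symmetric]) auto
  finally show ?thesis .
qed

definition Sets :: "nat \<Rightarrow> nat \<Rightarrow> nat set set" where
  "Sets m D = {U. U \<subseteq> {..<m} \<and> card U = D}"

lemma Sets_fin: "finite (Sets m D)"
  unfolding Sets_def by (rule finite_subset[of _ "Pow {..<m}"]) auto

lemma Sets_ne: "D \<le> m \<Longrightarrow> Sets m D \<noteq> {}"
proof -
  assume "D \<le> m"
  then have "{..<D} \<in> Sets m D" unfolding Sets_def by auto
  then show ?thesis by blast
qed

lemma Sets_card: "card (Sets m D) = m choose D"
  unfolding Sets_def using n_subsets[of "{..<m}" D] by simp

lemma set_pmf_Sets: "D \<le> m \<Longrightarrow> set_pmf (pmf_of_set (Sets m D)) = Sets m D"
  by (simp add: Sets_ne Sets_fin)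

lemma fin_pmf_Sets: "D \<le> m \<Longrightarrow> finite (set_pmf (pmf_of_set (Sets m D)))"
  by (simp add: set_pmf_Sets Sets_fin)

lemma D1_exp:
  fixes y r :: real and z :: "nat \<Rightarrow> real"
  assumes "T \<subseteq> {..<m}" "D \<le> m" "0 \<le> r" "\<forall>a\<in>T. 0 \<le> z a \<and> z a \<le> y"
    "real D \<le> r * (real m - real (card T) + 1)"
  shows "measure_pmf.expectation (pmf_of_set (Sets m D)) (\<lambda>U. \<Prod>a\<in>T. if a \<in> U then y else z a)
           \<le> (\<Prod>a\<in>T. r*y + (1-r)*z a)"
proof -
  have "measure_pmf.expectation (pmf_of_set (Sets m D)) (\<lambda>U. \<Prod>a\<in>T. if a \<in> U then y else z a)
      = (\<Sum>U\<in>Sets m D. \<Prod>a\<in>T. if a \<in> U then y else z a) / real (card (Sets m D))"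
    by (rule integral_pmf_of_set[OF Sets_ne[OF assms(2)] Sets_fin])
  also have "\<dots> \<le> (real (m choose D) * (\<Prod>a\<in>T. r*y + (1-r)*z a)) / real (card (Sets m D))"
    using D1_sum[of "{..<m}" T r z y D] assms unfolding Sets_def
    by (intro divide_right_mono) auto
  also have "\<dots> = (\<Prod>a\<in>T. r*y + (1-r)*z a)"
  proof -
    have "m choose D > 0" using assms(2) by simp
    then show ?thesis by (simp add: Sets_card)
  qed
  finally show ?thesis .
qed

lemma set_Pi_Sets:
  assumes "finite S" "D \<le> m"
  shows "set_pmf (Pi_pmf S {} (\<lambda>_. pmf_of_set (Sets m D))) = PiE_dflt S {} (\<lambda>_. Sets m D)"
  using assms by (simp add: set_Pi_pmf o_def Sets_ne Sets_fin)

lemma fin_Pi_Sets: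
  assumes "finite S" "D \<le> m"
  shows "finite (set_pmf (Pi_pmf S {} (\<lambda>_. pmf_of_set (Sets m D))))"
  using assms by (simp add: set_Pi_Sets finite_PiE_dflt Sets_fin)

lemma K_lemma:
  fixes y r :: real and x :: "nat \<Rightarrow> real"
  assumes "finite S" "T \<subseteq> {..<m}" "D \<le> m" "0 \<le> r" "r \<le> 1" "\<forall>a\<in>T. 0 \<le> x a \<and> x a \<le> y"
    "real D \<le> r * (real m - real (card T) + 1)"
  shows "measure_pmf.expectation (Pi_pmf S {} (\<lambda>_. pmf_of_set (Sets m D)))
            (\<lambda>H. \<Prod>a\<in>T. if (\<exists>j\<in>S. a \<in> H j) then y else x a)
         \<le> (\<Prod>a\<in>T. y - (1-r)^card S * (y - x a))"
  using assms(1,6)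
proof (induction S arbitrary: x rule: finite_induct)
  case empty
  then show ?case by simp
next
  case (insert j S x)
  let ?P = "pmf_of_set (Sets m D)"
  let ?Q = "Pi_pmf S {} (\<lambda>_. ?P)"
  define \<pi> where "\<pi> = (1-r)^card S"
  have \<pi>01: "0 \<le> \<pi>" "\<pi> \<le> 1" unfolding \<pi>_def using assms(4,5) by (auto intro: power_le_one)
  have eq: "Pi_pmf (insert j S) {} (\<lambda>_. ?P) = ?P \<bind> (\<lambda>V. ?Q \<bind> (\<lambda>H. return_pmf (H(j := V))))"
    using insert.hyps by (rule Pi_pmf_insert')
  have "measure_pmf.expectation (Pi_pmf (insert j S) {} (\<lambda>_. ?P))
            (\<lambda>H. \<Prod>a\<in>T. if (\<exists>j'\<in>insert j S. a \<in> H j') then y else x a)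
      = measure_pmf.expectation ?P (\<lambda>V. measure_pmf.expectation ?Q
            (\<lambda>H. \<Prod>a\<in>T. if (\<exists>j'\<in>S. a \<in> H j') then y else (if a \<in> V then y else x a)))"
  proof -
    have A: "measure_pmf.expectation (Pi_pmf (insert j S) {} (\<lambda>_. ?P))
            (\<lambda>H. \<Prod>a\<in>T. if (\<exists>j'\<in>insert j S. a \<in> H j') then y else x a)
        = measure_pmf.expectation ?P (\<lambda>V. measure_pmf.expectation (?Q \<bind> (\<lambda>H. return_pmf (H(j := V))))
            (\<lambda>H. \<Prod>a\<in>T. if (\<exists>j'\<in>insert j S. a \<in> H j') then y else x a))"
      unfolding eq
    proof (rule exp_bind_fin)
      show "finite (set_pmf ?P)" using fin_pmf_Sets[OF assms(3)] .
      fix V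
      show "finite (set_pmf (?Q \<bind> (\<lambda>H. return_pmf (H(j := V)))))"
        using fin_Pi_Sets[OF insert.hyps(1) assms(3)] by (simp add: set_bind_pmf)
    qed
    also have "\<dots> = measure_pmf.expectation ?P (\<lambda>V. measure_pmf.expectation ?Q
            (\<lambda>H. \<Prod>a\<in>T. if (\<exists>j'\<in>S. a \<in> H j') then y else (if a \<in> V then y else x a)))"
    proof (rule Bochner_Integration.integral_cong[OF refl])
      fix V
      have "measure_pmf.expectation (?Q \<bind> (\<lambda>H. return_pmf (H(j := V))))
            (\<lambda>H. \<Prod>a\<in>T. if (\<exists>j'\<in>insert j S. a \<in> H j') then y else x a)
          = measure_pmf.expectation ?Q (\<lambda>H. measure_pmf.expectation (return_pmf (H(j := V)))
            (\<lambda>H. \<Prod>a\<in>T. if (\<exists>j'\<in>insert j S. a \<in> H j') then y else x a))"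
        using fin_Pi_Sets[OF insert.hyps(1) assms(3)] by (intro exp_bind_fin) auto
      also have "\<dots> = measure_pmf.expectation ?Q
            (\<lambda>H. \<Prod>a\<in>T. if (\<exists>j'\<in>S. a \<in> H j') then y else (if a \<in> V then y else x a))"
      proof (intro Bochner_Integration.integral_cong refl)
        fix H
        have "\<And>a. (\<exists>j'\<in>insert j S. a \<in> (H(j := V)) j') = (a \<in> V \<or> (\<exists>j'\<in>S. a \<in> H j'))"
          using insert.hyps(2) by auto
        then show "measure_pmf.expectation (return_pmf (H(j := V)))
            (\<lambda>H. \<Prod>a\<in>T. if (\<exists>j'\<in>insert j S. a \<in> H j') then y else x a) =
            (\<Prod>a\<in>T. if (\<exists>j'\<in>S. a \<in> H j') then y else (if a \<in> V then y else x a))"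
          by (auto intro!: prod.cong)
      qed
      finally show "measure_pmf.expectation (?Q \<bind> (\<lambda>H. return_pmf (H(j := V))))
            (\<lambda>H. \<Prod>a\<in>T. if (\<exists>j'\<in>insert j S. a \<in> H j') then y else x a)
          = measure_pmf.expectation ?Q
            (\<lambda>H. \<Prod>a\<in>T. if (\<exists>j'\<in>S. a \<in> H j') then y else (if a \<in> V then y else x a))" .
    qed
    finally show ?thesis .
  qed
  also have "\<dots> \<le> measure_pmf.expectation ?P (\<lambda>V. \<Prod>a\<in>T. if a \<in> V then y else (y - \<pi> * (y - x a)))"
  proof (rule integral_mono)
    show "integrable (measure_pmf ?P) (\<lambda>V. measure_pmf.expectation ?Q
            (\<lambda>H. \<Prod>a\<in>T. if (\<exists>j'\<in>S. a \<in> H j') then y else (if a \<in> V then y else x a)))"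
      "integrable (measure_pmf ?P) (\<lambda>V. \<Prod>a\<in>T. if a \<in> V then y else (y - \<pi> * (y - x a)))"
      using fin_pmf_Sets[OF assms(3)] by (auto intro!: integrable_measure_pmf_finite)
    fix V
    have "measure_pmf.expectation ?Q
            (\<lambda>H. \<Prod>a\<in>T. if (\<exists>j'\<in>S. a \<in> H j') then y else (if a \<in> V then y else x a))
        \<le> (\<Prod>a\<in>T. y - \<pi> * (y - (if a \<in> V then y else x a)))"
      unfolding \<pi>_def using insert.prems by (intro insert.IH) auto
    also have "\<dots> = (\<Prod>a\<in>T. if a \<in> V then y else (y - \<pi> * (y - x a)))"
      by (intro prod.cong) auto
    finally show "measure_pmf.expectation ?Q
            (\<lambda>H. \<Prod>a\<in>T. if (\<exists>j'\<in>S. a \<in> H j') then y else (if a \<in> V then y else x a))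
        \<le> (\<Prod>a\<in>T. if a \<in> V then y else (y - \<pi> * (y - x a)))" .
  qed
  also have "\<dots> \<le> (\<Prod>a\<in>T. r * y + (1-r) * (y - \<pi> * (y - x a)))"
  proof (rule D1_exp[OF assms(2,3,4) _ assms(7)])
    show "\<forall>a\<in>T. 0 \<le> y - \<pi> * (y - x a) \<and> y - \<pi> * (y - x a) \<le> y"
    proof
      fix a assume "a \<in> T"
      then have xa: "0 \<le> x a" "x a \<le> y" using insert.prems by auto
      have "\<pi> * (y - x a) \<le> 1 * (y - x a)" using \<pi>01 xa by (intro mult_right_mono) auto
      moreover have "0 \<le> \<pi> * (y - x a)" using \<pi>01 xa by simp
      ultimately show "0 \<le> y - \<pi> * (y - x a) \<and> y - \<pi> * (y - x a) \<le> y" using xa by simp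
    qed
  qed
  also have "\<dots> = (\<Prod>a\<in>T. y - (1-r)^card (insert j S) * (y - x a))"
    using insert.hyps unfolding \<pi>_def by (intro prod.cong) (auto simp: algebra_simps)
  finally show ?case .
qed

lemma pow_card_prod:
  fixes t :: real
  assumes "finite T"
  shows "t ^ card {a\<in>T. P a} = (\<Prod>a\<in>T. if P a then t else 1)"
proof -
  have "(\<Prod>a\<in>T. if P a then t else 1) = (\<Prod>a\<in>{a\<in>T. P a}. t)"
    by (rule prod.inter_filter[OF assms, symmetric])
  then show ?thesis by simp
qed

lemma fin_bern: "finite (set_pmf (bernoulli_pmf p))"
  by (rule finite_subset[of _ UNIV]) auto

lemma fin_PF: "finite (set_pmf (Pi_pmf {..<(m::nat)} False (\<lambda>_. bernoulli_pmf p)))"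
proof (rule finite_subset[OF set_Pi_pmf_subset'])
  show "finite (PiE_dflt {..<m} False (set_pmf \<circ> (\<lambda>_. bernoulli_pmf p)))"
    using fin_bern by (intro finite_PiE_dflt) auto
qed simp

lemma F_mgf:
  fixes t p :: real and m :: nat
  assumes "T \<subseteq> {..<m}" "0 \<le> t" "0 \<le> p" "p \<le> 1"
  shows "measure_pmf.expectation (Pi_pmf {..<m} False (\<lambda>_. bernoulli_pmf p))
           (\<lambda>F. t ^ card {a\<in>T. Q a (F a)})
         = (\<Prod>a\<in>T. p * (if Q a True then t else 1) + (1-p) * (if Q a False then t else 1))"
proof -
  have finT: "finite T" by (rule finite_subset[OF assms(1)]) simp
  define g where "g = (\<lambda>a b. if a \<in> T then (if Q a b then t else 1) else (1::real))"
  have "\<And>F. t ^ card {a\<in>T. Q a (F a)} = (\<Prod>a\<in>{..<m}. g a (F a))"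
  proof -
    fix F
    have "t ^ card {a\<in>T. Q a (F a)} = (\<Prod>a\<in>T. if Q a (F a) then t else 1)"
      using finT by (rule pow_card_prod)
    also have "\<dots> = (\<Prod>a\<in>{a\<in>{..<m}. a \<in> T}. if Q a (F a) then t else 1)"
      using assms(1) by (intro prod.cong) auto
    also have "\<dots> = (\<Prod>a\<in>{..<m}. g a (F a))"
      unfolding g_def using prod.inter_filter[of "{..<m}" "\<lambda>a. if Q a (F a) then t else 1" "\<lambda>a. a \<in> T"]
      by (simp add: if_distrib)
    finally show "t ^ card {a\<in>T. Q a (F a)} = (\<Prod>a\<in>{..<m}. g a (F a))" .
  qed
  then have "measure_pmf.expectation (Pi_pmf {..<m} False (\<lambda>_. bernoulli_pmf p))
           (\<lambda>F. t ^ card {a\<in>T. Q a (F a)})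
         = measure_pmf.expectation (Pi_pmf {..<m} False (\<lambda>_. bernoulli_pmf p))
           (\<lambda>F. \<Prod>a\<in>{..<m}. g a (F a))" by simp
  also have "\<dots> = (\<Prod>a\<in>{..<m}. measure_pmf.expectation (bernoulli_pmf p) (g a))"
  proof (rule expectation_prod_Pi_pmf[where f=g and A="{..<m}" and p="\<lambda>_. bernoulli_pmf p" and dflt=False])
    show "\<And>x. x \<in> {..<m} \<Longrightarrow> integrable (measure_pmf (bernoulli_pmf p)) (g x)"
      by (rule integrable_measure_pmf_finite[OF fin_bern])
    show "\<And>x y. x \<in> {..<m} \<Longrightarrow> y \<in> set_pmf (bernoulli_pmf p) \<Longrightarrow> 0 \<le> g x y"
      unfolding g_def using assms(2) by simp
  qed simp
  also have "\<dots> = (\<Prod>a\<in>{..<m}. if a \<in> T then p * (if Q a True then t else 1) + (1-p) * (if Q a False then t else 1) else 1)"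
    using assms(3,4) by (intro prod.cong) (auto simp: g_def)
  also have "\<dots> = (\<Prod>a\<in>{a\<in>{..<m}. a \<in> T}. p * (if Q a True then t else 1) + (1-p) * (if Q a False then t else 1))"
    by (rule prod.inter_filter[symmetric]) simp
  also have "{a\<in>{..<m}. a \<in> T} = T" using assms(1) by auto
  finally show ?thesis .
qed

lemma markov_fin:
  fixes f :: "'a \<Rightarrow> real"
  assumes "finite (set_pmf M)" "c > 0" "\<And>x. x \<in> set_pmf M \<Longrightarrow> 0 \<le> f x"
    "\<And>x. x \<in> set_pmf M \<Longrightarrow> x \<in> A \<Longrightarrow> c \<le> f x"
  shows "measure_pmf.prob M A \<le> measure_pmf.expectation M f / c"
proof -
  have "measure_pmf.prob M A = measure_pmf.expectation M (indicator A)"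
    by simp
  also have "\<dots> \<le> measure_pmf.expectation M (\<lambda>x. f x / c)"
  proof (rule integral_mono_AE)
    show "integrable (measure_pmf M) (indicator A :: 'a \<Rightarrow> real)"
      "integrable (measure_pmf M) (\<lambda>x. f x / c)"
      using assms(1) by (auto intro!: integrable_measure_pmf_finite)
    show "AE x in measure_pmf M. indicator A x \<le> f x / c"
    proof (rule AE_pmfI)
      fix x assume x: "x \<in> set_pmf M"
      show "indicator A x \<le> f x / c"
      proof (cases "x \<in> A")
        case True
        then have "c \<le> f x" using assms(4)[OF x] by blast
        then show ?thesis using True assms(2) by simp
      next
        case False
        then show ?thesis using assms(2) assms(3)[OF x] by simp
      qed
    qed
  qed
  also have "\<dots> = measure_pmf.expectation M f / c" by simp
  finally show ?thesis .
qed

abbreviation PF :: "nat \<Rightarrow> real \<Rightarrow> (nat \<Rightarrow> bool) pmf" where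
  "PF m p \<equiv> Pi_pmf {..<m} False (\<lambda>_. bernoulli_pmf p)"

abbreviation PG :: "nat \<Rightarrow> nat \<Rightarrow> nat \<Rightarrow> (nat \<Rightarrow> nat set) pmf" where
  "PG n m D \<equiv> Pi_pmf {..<n} {} (\<lambda>_. pmf_of_set (Sets m D))"

lemma not_displayed: "(\<not> displayed S G F a) = ((\<exists>j\<in>S. a \<in> G j) = F a)"
  unfolding displayed_def by auto

lemma infected_bound:
  fixes t1 p \<alpha> :: real
  assumes "i \<in> S" "G i \<in> Sets m D" "1 \<le> t1" "0 \<le> p" "p \<le> 1"
  shows "measure_pmf.prob (PF m p) {F. \<alpha> * real D \<le> real (card {a\<in>G i. \<not> displayed S G F a})}
         \<le> (p*t1 + (1-p))^D / t1 powr (\<alpha> * real D)"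
proof -
  have Gi: "G i \<subseteq> {..<m}" "card (G i) = D" using assms(2) unfolding Sets_def by auto
  have t1p: "0 < t1" using assms(3) by simp
  have "measure_pmf.prob (PF m p) {F. \<alpha> * real D \<le> real (card {a\<in>G i. \<not> displayed S G F a})}
      \<le> measure_pmf.expectation (PF m p) (\<lambda>F. t1 ^ card {a\<in>G i. ((\<exists>j\<in>S. a \<in> G j) = F a)}) / t1 powr (\<alpha> * real D)"
  proof (rule markov_fin[OF fin_PF])
    show "0 < t1 powr (\<alpha> * real D)" using t1p by simp
    fix F
    show "0 \<le> t1 ^ card {a\<in>G i. ((\<exists>j\<in>S. a \<in> G j) = F a)}" using t1p by simp
    assume "F \<in> {F. \<alpha> * real D \<le> real (card {a\<in>G i. \<not> displayed S G F a})}"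
    then have "\<alpha> * real D \<le> real (card {a\<in>G i. ((\<exists>j\<in>S. a \<in> G j) = F a)})"
      by (simp add: not_displayed)
    then have "t1 powr (\<alpha> * real D) \<le> t1 powr real (card {a\<in>G i. ((\<exists>j\<in>S. a \<in> G j) = F a)})"
      using assms(3) by (rule powr_mono)
    then show "t1 powr (\<alpha> * real D) \<le> t1 ^ card {a\<in>G i. ((\<exists>j\<in>S. a \<in> G j) = F a)}"
      using t1p by (simp add: powr_realpow)
  qed
  also have "measure_pmf.expectation (PF m p) (\<lambda>F. t1 ^ card {a\<in>G i. ((\<exists>j\<in>S. a \<in> G j) = F a)})
      = (\<Prod>a\<in>G i. p * (if (\<exists>j\<in>S. a \<in> G j) = True then t1 else 1) + (1-p) * (if (\<exists>j\<in>S. a \<in> G j) = False then t1 else 1))"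
    using F_mgf[OF Gi(1), of t1 p "\<lambda>a b. (\<exists>j\<in>S. a \<in> G j) = b"] t1p assms(4,5) by simp
  also have "\<dots> = (\<Prod>a\<in>G i. p * t1 + (1-p))"
    using assms(1) by (intro prod.cong) auto
  also have "\<dots> = (p*t1 + (1-p))^D" using Gi by simp
  finally show ?thesis by simp
qed

lemma healthy_F_bound:
  fixes t p \<alpha> :: real
  assumes "G i \<in> Sets m D" "0 < t" "t < 1" "0 \<le> p" "p \<le> 1"
  shows "measure_pmf.prob (PF m p) {F. \<not> \<alpha> * real D \<le> real (card {a\<in>G i. \<not> displayed S G F a})}
         \<le> (\<Prod>a\<in>G i. if (\<exists>j\<in>S. a \<in> G j) then p*t + (1-p) else p + (1-p)*t) / t powr (\<alpha> * real D)"
proof -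
  have Gi: "G i \<subseteq> {..<m}" "card (G i) = D" using assms(1) unfolding Sets_def by auto
  have "measure_pmf.prob (PF m p) {F. \<not> \<alpha> * real D \<le> real (card {a\<in>G i. \<not> displayed S G F a})}
      \<le> measure_pmf.expectation (PF m p) (\<lambda>F. t ^ card {a\<in>G i. ((\<exists>j\<in>S. a \<in> G j) = F a)}) / t powr (\<alpha> * real D)"
  proof (rule markov_fin[OF fin_PF])
    show "0 < t powr (\<alpha> * real D)" using assms(2) by simp
    fix F
    show "0 \<le> t ^ card {a\<in>G i. ((\<exists>j\<in>S. a \<in> G j) = F a)}" using assms(2) by simp
    assume "F \<in> {F. \<not> \<alpha> * real D \<le> real (card {a\<in>G i. \<not> displayed S G F a})}"
    then have "real (card {a\<in>G i. ((\<exists>j\<in>S. a \<in> G j) = F a)}) \<le> \<alpha> * real D"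
      by (simp add: not_displayed)
    then have "t powr (\<alpha> * real D) \<le> t powr real (card {a\<in>G i. ((\<exists>j\<in>S. a \<in> G j) = F a)})"
      using assms(2,3) by (intro powr_mono') auto
    then show "t powr (\<alpha> * real D) \<le> t ^ card {a\<in>G i. ((\<exists>j\<in>S. a \<in> G j) = F a)}"
      using assms(2) by (simp add: powr_realpow)
  qed
  also have "measure_pmf.expectation (PF m p) (\<lambda>F. t ^ card {a\<in>G i. ((\<exists>j\<in>S. a \<in> G j) = F a)})
      = (\<Prod>a\<in>G i. p * (if (\<exists>j\<in>S. a \<in> G j) = True then t else 1) + (1-p) * (if (\<exists>j\<in>S. a \<in> G j) = False then t else 1))"
    using F_mgf[OF Gi(1), of t p "\<lambda>a b. (\<exists>j\<in>S. a \<in> G j) = b"] assms(2,4,5) by simp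
  also have "\<dots> = (\<Prod>a\<in>G i. if (\<exists>j\<in>S. a \<in> G j) then p*t + (1-p) else p + (1-p)*t)"
    by (intro prod.cong) auto
  finally show ?thesis by simp
qed


lemma exp_le_const:
  fixes f :: "'a \<Rightarrow> real"
  assumes "finite (set_pmf M)" "\<And>x. x \<in> set_pmf M \<Longrightarrow> f x \<le> c"
  shows "measure_pmf.expectation M f \<le> c"
proof -
  have "measure_pmf.expectation M f \<le> measure_pmf.expectation M (\<lambda>_. c)"
    using assms by (intro integral_mono_AE AE_pmfI integrable_measure_pmf_finite) auto
  then show ?thesis by simp
qed

lemma exp_ge_const:
  fixes f :: "'a \<Rightarrow> real"
  assumes "finite (set_pmf M)" "\<And>x. x \<in> set_pmf M \<Longrightarrow> c \<le> f x"
  shows "c \<le> measure_pmf.expectation M f"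
proof -
  have "measure_pmf.expectation M (\<lambda>_. c) \<le> measure_pmf.expectation M f"
    using assms by (intro integral_mono_AE AE_pmfI integrable_measure_pmf_finite) auto
  then show ?thesis by simp
qed

lemma healthy_G:
  fixes x y :: real
  assumes "S \<subseteq> {..<n}" "card S = k" "i < n" "i \<notin> S" "D \<le> m" "2*D \<le> m+1" "0 \<le> x" "x \<le> y"
  shows "measure_pmf.expectation (PG n m D) (\<lambda>G. \<Prod>a\<in>G i. if (\<exists>j\<in>S. a \<in> G j) then y else x)
         \<le> (y - (1 - real D/(real m - real D + 1))^k * (y - x))^D"
proof -
  let ?P = "pmf_of_set (Sets m D)"
  define A where "A = {..<n} - {i}"
  define r where "r = real D/(real m - real D + 1)"
  let ?Q = "Pi_pmf A {} (\<lambda>_. ?P)"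
  define \<Phi> where "\<Phi> = (\<lambda>(U::nat set) (H::nat \<Rightarrow> nat set). \<Prod>a\<in>U. if (\<exists>j\<in>S. a \<in> H j) then y else x)"
  have finA: "finite A" unfolding A_def by simp
  have SA: "S \<subseteq> A" using assms(1,4) unfolding A_def by auto
  have finS: "finite S" using assms(1) finite_subset by (metis finite_lessThan)
  have eqn: "{..<n} = insert i A" using assms(3) unfolding A_def by auto
  have iA: "i \<notin> A" unfolding A_def by simp
  have eqP: "PG n m D = ?P \<bind> (\<lambda>U. ?Q \<bind> (\<lambda>H. return_pmf (H(i := U))))"
    unfolding eqn by (rule Pi_pmf_insert'[OF finA iA])
  have mD: "real m - real D + 1 > 0" using assms(5) by simp
  have r01: "0 \<le> r" "r \<le> 1" unfolding r_def using mD assms(6) by (auto simp: field_simps)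
  have "measure_pmf.expectation (PG n m D) (\<lambda>G. \<Prod>a\<in>G i. if (\<exists>j\<in>S. a \<in> G j) then y else x)
      = measure_pmf.expectation ?P (\<lambda>U. measure_pmf.expectation (?Q \<bind> (\<lambda>H. return_pmf (H(i := U))))
           (\<lambda>G. \<Prod>a\<in>G i. if (\<exists>j\<in>S. a \<in> G j) then y else x))"
    unfolding eqP
  proof (rule exp_bind_fin)
    show "finite (set_pmf ?P)" using fin_pmf_Sets[OF assms(5)] .
    fix U
    show "finite (set_pmf (?Q \<bind> (\<lambda>H. return_pmf (H(i := U)))))"
      using fin_Pi_Sets[OF finA assms(5)] by (simp add: set_bind_pmf)
  qed
  also have "\<dots> = measure_pmf.expectation ?P (\<lambda>U. measure_pmf.expectation ?Q (\<Phi> U))"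
  proof (rule Bochner_Integration.integral_cong[OF refl])
    fix U
    have "measure_pmf.expectation (?Q \<bind> (\<lambda>H. return_pmf (H(i := U))))
           (\<lambda>G. \<Prod>a\<in>G i. if (\<exists>j\<in>S. a \<in> G j) then y else x)
        = measure_pmf.expectation ?Q (\<lambda>H. measure_pmf.expectation (return_pmf (H(i := U)))
           (\<lambda>G. \<Prod>a\<in>G i. if (\<exists>j\<in>S. a \<in> G j) then y else x))"
      using fin_Pi_Sets[OF finA assms(5)] by (intro exp_bind_fin) auto
    also have "\<dots> = measure_pmf.expectation ?Q (\<Phi> U)"
    proof (rule Bochner_Integration.integral_cong[OF refl])
      fix H
      have "\<And>a. (\<exists>j\<in>S. a \<in> (H(i := U)) j) = (\<exists>j\<in>S. a \<in> H j)"
        using assms(4) by auto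
      then show "measure_pmf.expectation (return_pmf (H(i := U)))
           (\<lambda>G. \<Prod>a\<in>G i. if (\<exists>j\<in>S. a \<in> G j) then y else x) = \<Phi> U H"
        unfolding \<Phi>_def by simp
    qed
    finally show "measure_pmf.expectation (?Q \<bind> (\<lambda>H. return_pmf (H(i := U))))
           (\<lambda>G. \<Prod>a\<in>G i. if (\<exists>j\<in>S. a \<in> G j) then y else x)
        = measure_pmf.expectation ?Q (\<Phi> U)" .
  qed
  also have "\<dots> \<le> (y - (1 - r)^k * (y - x))^D"
  proof (rule exp_le_const[OF fin_pmf_Sets[OF assms(5)]])
    fix U assume "U \<in> set_pmf ?P"
    then have U: "U \<in> Sets m D" using set_pmf_Sets[OF assms(5)] by simp
    then have U': "U \<subseteq> {..<m}" "card U = D" unfolding Sets_def by auto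
    have "measure_pmf.expectation (Pi_pmf S {} (\<lambda>_. ?P)) (\<Phi> U)
        = measure_pmf.expectation (map_pmf (\<lambda>f x. if x \<in> S then f x else {}) ?Q) (\<Phi> U)"
      by (subst Pi_pmf_subset[OF finA SA]) rule
    also have "\<dots> = measure_pmf.expectation ?Q (\<lambda>f. \<Phi> U (\<lambda>x. if x \<in> S then f x else {}))"
      by simp
    also have "\<dots> = measure_pmf.expectation ?Q (\<Phi> U)"
      unfolding \<Phi>_def by (intro Bochner_Integration.integral_cong refl prod.cong) auto
    finally have eq2: "measure_pmf.expectation ?Q (\<Phi> U) = measure_pmf.expectation (Pi_pmf S {} (\<lambda>_. ?P)) (\<Phi> U)" ..
    have "measure_pmf.expectation (Pi_pmf S {} (\<lambda>_. ?P)) (\<Phi> U) \<le> (\<Prod>a\<in>U. y - (1-r)^card S * (y - x))"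
      unfolding \<Phi>_def
    proof (rule K_lemma[OF finS U'(1) assms(5) r01])
      show "\<forall>a\<in>U. 0 \<le> x \<and> x \<le> y" using assms(7,8) by simp
      show "real D \<le> r * (real m - real (card U) + 1)" using U'(2) mD unfolding r_def by simp
    qed
    also have "\<dots> = (y - (1 - r)^k * (y - x))^D" using U'(2) assms(2) by simp
    finally show "measure_pmf.expectation ?Q (\<Phi> U) \<le> (y - (1 - r)^k * (y - x))^D"
      using eq2 by simp
  qed
  finally show ?thesis unfolding r_def .
qed


definition Wset :: "nat \<Rightarrow> real \<Rightarrow> nat set \<Rightarrow> (nat \<Rightarrow> nat set) \<Rightarrow> nat \<Rightarrow> (nat \<Rightarrow> bool) set" where
  "Wset D \<alpha> S G i = {F. if i \<in> S then \<alpha> * real D \<le> real (card {a\<in>G i. \<not> displayed S G F a})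
                         else \<not> \<alpha> * real D \<le> real (card {a\<in>G i. \<not> displayed S G F a})}"

lemma per_G:
  assumes "S \<subseteq> {..<n}"
  shows "1 - (\<Sum>i<n. measure_pmf.prob (PF m p) (Wset D \<alpha> S G i))
     \<le> measure_pmf.prob (PF m p) {F. noisy_comp n D \<alpha> G (displayed S G F) = S}"
proof -
  have sub: "UNIV \<subseteq> {F. noisy_comp n D \<alpha> G (displayed S G F) = S} \<union> (\<Union>i\<in>{..<n}. Wset D \<alpha> S G i)"
  proof
    fix F :: "nat \<Rightarrow> bool"
    assume "F \<in> UNIV"
    show "F \<in> {F. noisy_comp n D \<alpha> G (displayed S G F) = S} \<union> (\<Union>i\<in>{..<n}. Wset D \<alpha> S G i)"
    proof (cases "F \<in> (\<Union>i\<in>{..<n}. Wset D \<alpha> S G i)")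
      case False
      then have "\<forall>i<n. F \<notin> Wset D \<alpha> S G i" by auto
      then have "noisy_comp n D \<alpha> G (displayed S G F) = S"
        using assms unfolding noisy_comp_def Wset_def by (auto split: if_splits)
      then show ?thesis by simp
    qed simp
  qed
  have "1 = measure_pmf.prob (PF m p) UNIV" by simp
  also have "\<dots> \<le> measure_pmf.prob (PF m p) ({F. noisy_comp n D \<alpha> G (displayed S G F) = S} \<union> (\<Union>i\<in>{..<n}. Wset D \<alpha> S G i))"
    using sub by (intro measure_pmf.finite_measure_mono) auto
  also have "\<dots> \<le> measure_pmf.prob (PF m p) {F. noisy_comp n D \<alpha> G (displayed S G F) = S}
       + measure_pmf.prob (PF m p) (\<Union>i\<in>{..<n}. Wset D \<alpha> S G i)"
    by (rule measure_subadditive) (auto simp: measure_pmf.emeasure_eq_measure)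
  also have "measure_pmf.prob (PF m p) (\<Union>i\<in>{..<n}. Wset D \<alpha> S G i) \<le> (\<Sum>i<n. measure_pmf.prob (PF m p) (Wset D \<alpha> S G i))"
    by (rule measure_pmf.finite_measure_subadditive_finite) auto
  finally show ?thesis by simp
qed

lemma main_finite:
  fixes p \<alpha> t1 t2 :: real
  assumes "k \<le> n" "D \<le> m" "2*D \<le> m+1" "0 < p" "p < 1/2" "1 \<le> t1" "0 < t2" "t2 < 1"
  shows "1 - (real k * ((p*t1 + (1-p))^D / t1 powr (\<alpha>*D))
          + real (n-k) * ((1 - (1-t2)*(p + (1 - real D/(real m - real D + 1))^k*(1-2*p)))^D / t2 powr (\<alpha>*D)))
         \<le> success_prob n k m D p \<alpha>"
proof -
  define B1 where "B1 = (p*t1 + (1-p))^D / t1 powr (\<alpha>*D)"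
  define B2 where "B2 = (1 - (1-t2)*(p + (1 - real D/(real m - real D + 1))^k*(1-2*p)))^D / t2 powr (\<alpha>*D)"
  let ?SK = "pmf_of_set (Sets n k)"
  let ?g = "\<lambda>S G. map_pmf (\<lambda>F. noisy_comp n D \<alpha> G (displayed S G F) = S) (PF m p)"
  have sp: "success_prob n k m D p \<alpha> = pmf (?SK \<bind> (\<lambda>S. PG n m D \<bind> (\<lambda>G. ?g S G))) True"
    unfolding success_prob_def Sets_def by (simp add: measure_pmf_single)
  have finSK: "finite (set_pmf ?SK)" using fin_pmf_Sets[OF assms(1)] .
  have finPG: "finite (set_pmf (PG n m D))" using fin_Pi_Sets[OF finite_lessThan[of n] assms(2)] .
  have inner: "1 - (real k * B1 + real (n-k) * B2) \<le> pmf (PG n m D \<bind> (\<lambda>G. ?g S G)) True"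
    if S: "S \<in> Sets n k" for S
  proof -
    have S': "S \<subseteq> {..<n}" "card S = k" using S unfolding Sets_def by auto
    have "pmf (PG n m D \<bind> (\<lambda>G. ?g S G)) True = measure_pmf.expectation (PG n m D) (\<lambda>G. pmf (?g S G) True)"
      by (rule pmf_bind)
    also have "\<dots> = measure_pmf.expectation (PG n m D)
        (\<lambda>G. measure_pmf.prob (PF m p) {F. noisy_comp n D \<alpha> G (displayed S G F) = S})"
      by (intro Bochner_Integration.integral_cong refl) (auto simp: pmf_map vimage_def)
    also have "\<dots> \<ge> measure_pmf.expectation (PG n m D)
        (\<lambda>G. 1 - (\<Sum>i<n. measure_pmf.prob (PF m p) (Wset D \<alpha> S G i)))"
      using finPG S'(1) by (intro integral_mono integrable_measure_pmf_finite per_G)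
    finally have ge1: "measure_pmf.expectation (PG n m D)
        (\<lambda>G. 1 - (\<Sum>i<n. measure_pmf.prob (PF m p) (Wset D \<alpha> S G i))) \<le> pmf (PG n m D \<bind> (\<lambda>G. ?g S G)) True" .
    have "measure_pmf.expectation (PG n m D)
        (\<lambda>G. 1 - (\<Sum>i<n. measure_pmf.prob (PF m p) (Wset D \<alpha> S G i)))
        = 1 - (\<Sum>i<n. measure_pmf.expectation (PG n m D) (\<lambda>G. measure_pmf.prob (PF m p) (Wset D \<alpha> S G i)))"
      using finPG by (simp add: Bochner_Integration.integral_diff Bochner_Integration.integral_sum integrable_measure_pmf_finite)
    moreover have "(\<Sum>i<n. measure_pmf.expectation (PG n m D) (\<lambda>G. measure_pmf.prob (PF m p) (Wset D \<alpha> S G i)))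
        \<le> (\<Sum>i<n. if i \<in> S then B1 else B2)"
    proof (rule sum_mono)
      fix i assume i: "i \<in> {..<n}"
      show "measure_pmf.expectation (PG n m D) (\<lambda>G. measure_pmf.prob (PF m p) (Wset D \<alpha> S G i))
          \<le> (if i \<in> S then B1 else B2)"
      proof (cases "i \<in> S")
        case True
        have "measure_pmf.expectation (PG n m D) (\<lambda>G. measure_pmf.prob (PF m p) (Wset D \<alpha> S G i)) \<le> B1"
        proof (rule exp_le_const[OF finPG])
          fix G assume "G \<in> set_pmf (PG n m D)"
          then have "G i \<in> Sets m D" using i set_Pi_Sets[OF finite_lessThan[of n] assms(2)] by (auto simp: PiE_dflt_def)
          then show "measure_pmf.prob (PF m p) (Wset D \<alpha> S G i) \<le> B1"
            unfolding Wset_def B1_def using True infected_bound[of i S G m D t1 p \<alpha>] assms by simp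
        qed
        then show ?thesis using True by simp
      next
        case False
        define y where "y = p*t2 + (1-p)"
        define x where "x = p + (1-p)*t2"
        have "measure_pmf.expectation (PG n m D) (\<lambda>G. measure_pmf.prob (PF m p) (Wset D \<alpha> S G i))
            \<le> measure_pmf.expectation (PG n m D) (\<lambda>G. (\<Prod>a\<in>G i. if (\<exists>j\<in>S. a \<in> G j) then y else x) / t2 powr (\<alpha> * real D))"
        proof (intro integral_mono_AE AE_pmfI integrable_measure_pmf_finite finPG)
          fix G assume "G \<in> set_pmf (PG n m D)"
          then have "G i \<in> Sets m D" using i set_Pi_Sets[OF finite_lessThan[of n] assms(2)] by (auto simp: PiE_dflt_def)
          then show "measure_pmf.prob (PF m p) (Wset D \<alpha> S G i)
              \<le> (\<Prod>a\<in>G i. if (\<exists>j\<in>S. a \<in> G j) then y else x) / t2 powr (\<alpha> * real D)"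
            unfolding Wset_def x_def y_def using False healthy_F_bound[of G i m D t2 p \<alpha> S] assms by simp
        qed
        also have "\<dots> = measure_pmf.expectation (PG n m D) (\<lambda>G. (\<Prod>a\<in>G i. if (\<exists>j\<in>S. a \<in> G j) then y else x)) / t2 powr (\<alpha> * real D)"
          by simp
        also have "\<dots> \<le> (y - (1 - real D/(real m - real D + 1))^k * (y - x))^D / t2 powr (\<alpha> * real D)"
        proof (rule divide_right_mono)
          show "0 \<le> t2 powr (\<alpha> * real D)" by simp
          show "measure_pmf.expectation (PG n m D) (\<lambda>G. (\<Prod>a\<in>G i. if (\<exists>j\<in>S. a \<in> G j) then y else x))
              \<le> (y - (1 - real D/(real m - real D + 1))^k * (y - x))^D"
          proof (rule healthy_G[OF S' _ False assms(2,3)])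
            show "i < n" using i by simp
            show "0 \<le> x" unfolding x_def using assms by simp
            show "x \<le> y"
            proof -
              have "0 \<le> (1-2*p)*(1-t2)" using assms by simp
              moreover have "y - x = (1-2*p)*(1-t2)" unfolding x_def y_def by (simp add: algebra_simps)
              ultimately show ?thesis by linarith
            qed
          qed
        qed
        also have "(y - (1 - real D/(real m - real D + 1))^k * (y - x))
            = 1 - (1-t2)*(p + (1 - real D/(real m - real D + 1))^k*(1-2*p))"
          unfolding x_def y_def by (simp add: algebra_simps)
        finally show ?thesis using False unfolding B2_def by simp
      qed
    qed
    moreover have "(\<Sum>i<n. if i \<in> S then B1 else B2) = real k * B1 + real (n-k) * B2"
    proof -
      have "(\<Sum>i<n. if i \<in> S then B1 else B2) = (\<Sum>i\<in>{..<n} \<inter> {x. x \<in> S}. B1) + (\<Sum>i\<in>{..<n} \<inter> - {x. x \<in> S}. B2)"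
        by (rule sum.If_cases) simp
      moreover have "{..<n} \<inter> {x. x \<in> S} = S" using S' by auto
      moreover have "{..<n} \<inter> - {x. x \<in> S} = {..<n} - S" by auto
      moreover have "card ({..<n} - S) = n - k" using S' by (simp add: card_Diff_subset finite_subset)
      ultimately show ?thesis using S' by simp
    qed
    ultimately show ?thesis using ge1 by linarith
  qed
  have "1 - (real k * B1 + real (n-k) * B2) \<le> measure_pmf.expectation ?SK (\<lambda>S. pmf (PG n m D \<bind> (\<lambda>G. ?g S G)) True)"
    using inner set_pmf_Sets[OF assms(1)] by (intro exp_ge_const[OF finSK]) auto
  also have "\<dots> = success_prob n k m D p \<alpha>" unfolding sp by (rule pmf_bind[symmetric])
  finally show ?thesis unfolding B1_def B2_def .
qed

lemma ln_strict:
  fixes x :: real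
  assumes "0 < x" "x \<noteq> 1"
  shows "ln x < x - 1"
proof -
  have sx: "0 < sqrt x" using assms by simp
  have "ln x = 2 * ln (sqrt x)"
    using assms by (simp add: ln_sqrt)
  also have "\<dots> \<le> 2 * (sqrt x - 1)" using ln_le_minus_one[OF sx] by simp
  also have "\<dots> < x - 1"
  proof -
    have "sqrt x \<noteq> 1" using assms by simp
    then have "0 < (sqrt x - 1)^2" by simp
    also have "(sqrt x - 1)^2 = x - 2 * sqrt x + 1" using assms by (simp add: power2_diff)
    finally show ?thesis by simp
  qed
  finally show ?thesis .
qed

lemma DKL_pos:
  assumes "0 < r" "r < 1" "0 < s" "s < 1" "r \<noteq> s"
  shows "0 < DKL r s"
proof -
  have a: "ln (s/r) < s/r - 1" using assms by (intro ln_strict) auto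
  have b: "ln ((1-s)/(1-r)) \<le> (1-s)/(1-r) - 1" using assms by (intro ln_le_minus_one) auto
  have "r * ln (s/r) < r * (s/r - 1)" using a assms by simp
  moreover have "(1-r) * ln ((1-s)/(1-r)) \<le> (1-r) * ((1-s)/(1-r) - 1)"
    using b assms by (intro mult_left_mono) auto
  moreover have "r * (s/r - 1) + (1-r) * ((1-s)/(1-r) - 1) = 0"
    using assms by (simp add: field_simps)
  moreover have "r * ln (r/s) = - (r * ln (s/r))" "(1-r) * ln ((1-r)/(1-s)) = - ((1-r) * ln ((1-s)/(1-r)))"
    using assms by (simp_all add: ln_div algebra_simps)
  ultimately show ?thesis unfolding DKL_def by linarith
qed

lemma DKL_opt:
  assumes "0 < a" "a < 1" "0 < s" "s < 1"
  shows "a * ln (a*(1-s)/(s*(1-a))) - ln (1 - s + s * (a*(1-s)/(s*(1-a)))) = DKL a s"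
proof -
  have e1: "1 - s + s * (a*(1-s)/(s*(1-a))) = (1-s)/(1-a)"
    using assms by (simp add: field_simps)
  have e2: "ln (a*(1-s)/(s*(1-a))) = ln a + ln (1-s) - ln s - ln (1-a)"
    using assms by (simp add: ln_div ln_mult)
  show ?thesis unfolding DKL_def e1 e2 using assms by (simp add: ln_div algebra_simps)
qed

definition qd :: "real \<Rightarrow> real \<Rightarrow> real" where
  "qd p d = exp (-d) + p - 2 * exp (-d) * p"

lemma qd_bounds:
  assumes "0 < p" "p < 1/2" "0 < d"
  shows "p < qd p d" "qd p d < 1"
proof -
  have e: "0 < exp (-d)" "exp (-d) < 1" using assms by auto
  have "qd p d = p + exp (-d) * (1 - 2*p)" unfolding qd_def by (simp add: algebra_simps)
  moreover have "0 < exp (-d) * (1 - 2*p)" using e assms by simp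
  moreover have "exp (-d) * (1 - 2*p) < 1 * (1 - 2*p)" using e assms by (intro mult_strict_right_mono) auto
  ultimately show "p < qd p d" by linarith
  show "qd p d < 1"
  proof -
    define z where "z = exp (-d) * (1 - 2*p)"
    have "qd p d = p + z" "z < 1 - 2*p" using \<open>qd p d = p + exp (-d) * (1 - 2*p)\<close>
      \<open>exp (-d) * (1 - 2*p) < 1 * (1 - 2*p)\<close> unfolding z_def by simp_all
    then show ?thesis using assms(1) by linarith
  qed
qed

lemma choose_ad:
  fixes p \<theta> \<epsilon> c :: real
  assumes "0 < p" and "p < 1/2" and "0 < \<theta>" and "\<theta> < 1" and "0 < \<epsilon>"
    and "c > (1 + \<epsilon>) * comp_const \<theta> p"
  shows "\<exists>\<alpha> d. admissible p \<alpha> d \<and> 0 < c \<and> \<theta> < c * (1-\<theta>) * d * DKL \<alpha> p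
           \<and> 1 < c * (1-\<theta>) * d * DKL \<alpha> (qd p d)"
proof -
  define X where "X = {max (b1 \<theta> p \<alpha> d) (b2 \<theta> p \<alpha> d) | \<alpha> d. admissible p \<alpha> d}"
  have adm: "admissible p \<alpha> d \<Longrightarrow> 0 < d \<and> p < \<alpha> \<and> \<alpha> < qd p d" for \<alpha> d
    unfolding admissible_def qd_def by simp
  have pos: "0 < b1 \<theta> p \<alpha> d \<and> 0 < b2 \<theta> p \<alpha> d" if "admissible p \<alpha> d" for \<alpha> d
  proof -
    have h: "0 < d" "p < \<alpha>" "\<alpha> < qd p d" using adm[OF that] by auto
    have q: "p < qd p d" "qd p d < 1" using qd_bounds[OF assms(1,2) h(1)] by auto
    have k1: "0 < DKL \<alpha> p" using h q assms by (intro DKL_pos) auto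
    have k2: "0 < DKL \<alpha> (qd p d)" using h q assms by (intro DKL_pos) auto
    show ?thesis unfolding b1_def b2_def using k1 k2 h assms qd_def by simp
  qed
  have ne: "X \<noteq> {}"
  proof -
    have "admissible p ((p + qd p 1)/2) 1"
      using qd_bounds[OF assms(1,2), of 1] unfolding admissible_def qd_def by simp
    then show ?thesis unfolding X_def by blast
  qed
  have "0 \<le> Inf X"
    using ne by (rule cInf_greatest) (auto simp: X_def dest!: pos)
  then have "Inf X \<le> (1 + \<epsilon>) * Inf X" using assms(5) mult_nonneg_nonneg[of \<epsilon> "Inf X"] by (simp add: algebra_simps)
  then have "Inf X < c" using assms(6) unfolding comp_const_def X_def by simp
  then obtain x where "x \<in> X" "x < c" using cInf_lessD[OF ne] by blast
  then obtain \<alpha> d where ad: "admissible p \<alpha> d" "max (b1 \<theta> p \<alpha> d) (b2 \<theta> p \<alpha> d) < c"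
    unfolding X_def by blast
  have h: "0 < d" "p < \<alpha>" "\<alpha> < qd p d" using adm[OF ad(1)] by auto
  have q: "p < qd p d" "qd p d < 1" using qd_bounds[OF assms(1,2) h(1)] by auto
  have k1: "0 < DKL \<alpha> p" using h q assms by (intro DKL_pos) auto
  have k2: "0 < DKL \<alpha> (qd p d)" using h q assms by (intro DKL_pos) auto
  have c0: "0 < c" using pos[OF ad(1)] ad(2) by linarith
  have "b1 \<theta> p \<alpha> d < c" using ad(2) by simp
  then have 1: "\<theta> < c * (1-\<theta>) * d * DKL \<alpha> p"
    unfolding b1_def using k1 h assms by (simp add: field_simps)
  have "b2 \<theta> p \<alpha> d < c" using ad(2) by simp
  then have 2: "1 < c * (1-\<theta>) * d * DKL \<alpha> (qd p d)"
    unfolding b2_def qd_def[symmetric] using k2 h assms by (simp add: field_simps)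
  show ?thesis using ad(1) c0 1 2 by blast
qed

lemma ln_ge_one_minus_inv:
  fixes x :: real
  assumes "0 < x"
  shows "1 - 1/x \<le> ln x"
proof -
  have "ln (1/x) \<le> 1/x - 1" using assms by (intro ln_le_minus_one) simp
  moreover have "ln (1/x) = - ln x" using assms by (simp add: ln_div)
  ultimately show ?thesis by simp
qed

lemma good_n:
  fixes c d D0 L :: real and k n :: nat
  assumes "0 < c" "0 < d" "d < D0" "1 \<le> k" "L = ln (real n / real k)" "1 \<le> L"
    "real k * (c*(D0-d)*L - 1) \<ge> D0*(2*c*d*L + 1)"
  defines "D \<equiv> nat \<lceil>c*d*L\<rceil>" and "m \<equiv> nat \<lceil>c*real k*L\<rceil>"
  shows "k \<le> n" "D \<le> m" "2*D \<le> m+1" "c*d*L \<le> real D"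
    "exp (-D0) \<le> (1 - real D/(real m - real D + 1))^k" "(1 - real D/(real m - real D + 1))^k \<le> 1"
proof -
  define K where "K = real k"
  have K1: "1 \<le> K" using assms(4) unfolding K_def by simp
  have "real n / real k \<noteq> 0"
  proof
    assume h: "real n / real k = 0"
    have "L = ln (real n / real k)" by (rule assms(5))
    also have "\<dots> = ln 0" by (simp only: h)
    finally have "L = 0" by simp
    then show False using assms(6) by simp
  qed
  then have nk0: "0 < real n / real k" by (simp add: divide_nonneg_nonneg order_le_neq_trans)
  have "0 < ln (real n / real k)" using assms(5,6) by simp
  then have "1 < real n / real k" using nk0 by simp
  then have "real k < real n" using K1 unfolding K_def by (simp add: field_simps)
  then show "k \<le> n" by simp
  have cdL: "0 \<le> c*d*L" using assms by simp
  have D1: "c*d*L \<le> real D" "real D \<le> c*d*L + 1"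
    unfolding D_def using cdL by linarith+
  show "c*d*L \<le> real D" using D1(1) .
  have cKL: "0 \<le> c*K*L" using assms K1 by simp
  have m1: "c*K*L \<le> real m" unfolding m_def K_def using cKL K_def by linarith
  define W where "W = c*K*L - 2*c*d*L - 1"
  have key: "K*(c*d*L + 1) \<le> D0 * W"
    using assms(7) unfolding W_def K_def by (simp add: algebra_simps)
  have "0 < K*(c*d*L + 1)" using K1 cdL by simp
  then have "0 < D0 * W" using key by linarith
  moreover have "0 < D0" using assms(2,3) by simp
  ultimately have W0: "0 < W" using zero_less_mult_pos by blast
  have mD: "W \<le> real m - 2 * real D + 1" unfolding W_def using m1 D1 by linarith
  then have "2 * real D < real m + 1" using W0 by linarith
  then show "2*D \<le> m+1" "D \<le> m" by linarith+
  define r where "r = real D/(real m - real D + 1)"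
  have den: "0 < real m - real D + 1" using mD W0 D1 by linarith
  have omr: "1 - r = (real m - 2 * real D + 1) / (real m - real D + 1)"
    unfolding r_def using den by (simp add: field_simps)
  have omr0: "0 < 1 - r" unfolding omr using den mD W0 by simp
  have r0: "0 \<le> r" unfolding r_def using den by simp
  show "(1 - real D/(real m - real D + 1))^k \<le> 1"
    using omr0 r0 unfolding r_def[symmetric] by (intro power_le_one) auto
  have lnb: "- (r / (1 - r)) \<le> ln (1 - r)"
  proof -
    have "1 - 1/(1-r) \<le> ln (1 - r)" using omr0 by (rule ln_ge_one_minus_inv)
    moreover have "1 - 1/(1-r) = - (r/(1-r))" using omr0 by (simp add: field_simps)
    ultimately show ?thesis by simp
  qed
  have rr: "r / (1 - r) = real D / (real m - 2 * real D + 1)"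
  proof -
    have den2: "0 < real m - 2 * real D + 1" using mD W0 by linarith
    have gen: "\<And>a b::real. 0 < b \<Longrightarrow> 0 < b - a \<Longrightarrow> (a/b)/(1 - a/b) = a/(b-a)"
      by (simp add: field_simps)
    have "r / (1 - r) = real D / ((real m - real D + 1) - real D)"
      unfolding r_def using den den2 by (intro gen) auto
    also have "(real m - real D + 1) - real D = real m - 2 * real D + 1" by simp
    finally show ?thesis .
  qed
  have "K * real D \<le> K * (c*d*L + 1)" using D1 K1 by simp
  also have "\<dots> \<le> D0 * W" by (rule key)
  also have "\<dots> \<le> D0 * (real m - 2 * real D + 1)" using mD assms(2,3) by simp
  finally have "K * (real D / (real m - 2 * real D + 1)) \<le> D0"
    using mD W0 by (simp add: field_simps)
  then have "K * (r/(1-r)) \<le> D0" using rr by simp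
  moreover have "K * (- (r / (1 - r))) \<le> K * ln (1 - r)" using lnb K1 by (intro mult_left_mono) auto
  ultimately have "-D0 \<le> K * ln (1 - r)" by simp
  then have "exp (-D0) \<le> exp (K * ln (1 - r))" by simp
  also have "exp (K * ln (1 - r)) = (1 - r)^k"
    unfolding K_def using omr0 by (simp add: exp_of_nat_mult)
  finally show "exp (-D0) \<le> (1 - real D/(real m - real D + 1))^k" unfolding r_def .
qed

lemma exp_form:
  fixes M t \<alpha> :: real
  assumes "0 < M" "0 < t"
  shows "M^D / t powr (\<alpha> * real D) = exp (- real D * (\<alpha> * ln t - ln M))"
proof -
  have "M^D = exp (real D * ln M)" using assms by (simp add: exp_of_nat_mult)
  moreover have "t powr (\<alpha> * real D) = exp (\<alpha> * real D * ln t)" using assms by (simp add: powr_def)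
  ultimately show ?thesis by (simp add: exp_diff[symmetric] algebra_simps)
qed

lemma pow_bound:
  fixes K n a b \<beta> \<theta> :: real
  assumes "0 < K" "0 < n" "K \<le> 2 * n powr \<theta>" "0 \<le> a + \<beta>"
  shows "n powr b * K powr a * exp (-\<beta> * ln (n/K)) \<le> 2 powr (a+\<beta>) * n powr (b - \<beta> + \<theta>*(a+\<beta>))"
proof -
  have "exp (-\<beta> * ln (n/K)) = n powr (-\<beta>) * K powr \<beta>"
    using assms by (simp add: powr_def ln_div exp_add[symmetric] algebra_simps)
  then have "n powr b * K powr a * exp (-\<beta> * ln (n/K)) = n powr (b - \<beta>) * K powr (a + \<beta>)"
    using assms by (simp add: powr_add powr_diff algebra_simps powr_minus divide_inverse)
  also have "\<dots> \<le> n powr (b - \<beta>) * (2 * n powr \<theta>) powr (a + \<beta>)"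
    using assms by (intro mult_left_mono powr_mono2) auto
  also have "(2 * n powr \<theta>) powr (a + \<beta>) = 2 powr (a+\<beta>) * n powr (\<theta>*(a+\<beta>))"
    using assms by (simp add: powr_mult powr_powr)
  also have "n powr (b - \<beta>) * (2 powr (a+\<beta>) * n powr (\<theta>*(a+\<beta>))) = 2 powr (a+\<beta>) * n powr (b - \<beta> + \<theta>*(a+\<beta>))"
    using assms by (simp add: powr_add)
  finally show ?thesis .
qed


lemma per_n:
  fixes p \<alpha> t1 t2 c d D0 \<theta> \<Lambda>1 \<Lambda>2 L :: real and k n :: nat
  assumes p: "0 < p" "p < 1/2" and t: "1 \<le> t1" "0 < t2" "t2 < 1"
    and cd: "0 < c" "0 < d" "d < D0" and th: "0 \<le> \<theta>"
    and L1: "\<Lambda>1 = \<alpha> * ln t1 - ln (p*t1 + (1-p))" "0 < \<Lambda>1"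
    and L2: "\<Lambda>2 = \<alpha> * ln t2 - ln (1 - (1-t2)*(p + exp (-D0)*(1-2*p)))" "0 < \<Lambda>2"
    and k: "1 \<le> k" "L = ln (real n / real k)" "1 \<le> L"
      "real k * (c*(D0-d)*L - 1) \<ge> D0*(2*c*d*L + 1)"
      "real k \<le> 2 * real n powr \<theta>"
  shows "1 - (2 powr (1 + c*d*\<Lambda>1) * real n powr (0 - c*d*\<Lambda>1 + \<theta>*(1 + c*d*\<Lambda>1))
            + 2 powr (0 + c*d*\<Lambda>2) * real n powr (1 - c*d*\<Lambda>2 + \<theta>*(0 + c*d*\<Lambda>2)))
         \<le> success_prob n k (nat \<lceil>c * real k * L\<rceil>) (nat \<lceil>c * d * L\<rceil>) p \<alpha>"
proof -
  define D where "D = nat \<lceil>c*d*L\<rceil>"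
  define m where "m = nat \<lceil>c*real k*L\<rceil>"
  define \<pi> where "\<pi> = (1 - real D/(real m - real D + 1))^k"
  note g0 = good_n[OF cd k(1-4), folded D_def m_def]
  have g: "k \<le> n" "D \<le> m" "2*D \<le> m+1" "c*d*L \<le> real D"
    "exp (-D0) \<le> \<pi>" "\<pi> \<le> 1"
    unfolding \<pi>_def by (fact g0(1), fact g0(2), fact g0(3), fact g0(4), fact g0(5), fact g0(6))
  have mf: "1 - (real k * ((p*t1 + (1-p))^D / t1 powr (\<alpha>*D))
          + real (n-k) * ((1 - (1-t2)*(p + \<pi>*(1-2*p)))^D / t2 powr (\<alpha>*D)))
         \<le> success_prob n k m D p \<alpha>"
    unfolding \<pi>_def using main_finite[OF g(1-3) p t] .
  have K0: "0 < real k" using k(1) by simp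
  have n0: "0 < real n" using g(1) k(1) by simp
  have "0 \<le> p*t1" using p t by simp
  then have M1: "0 < p*t1 + (1-p)" using p by linarith
  have B1: "(p*t1 + (1-p))^D / t1 powr (\<alpha>*D) \<le> exp (- (c*d*\<Lambda>1) * ln (real n / real k))"
  proof -
    have "(p*t1 + (1-p))^D / t1 powr (\<alpha>*D) = exp (- real D * \<Lambda>1)"
      unfolding L1(1) using M1 t by (intro exp_form) auto
    also have "\<dots> \<le> exp (- (c*d*L) * \<Lambda>1)"
    proof -
      have "c*d*L*\<Lambda>1 \<le> real D * \<Lambda>1" using g(4) L1(2) by (intro mult_right_mono) auto
      then show ?thesis by simp
    qed
    finally show ?thesis using k(2) by (simp add: algebra_simps)
  qed
  have e1: "real k * ((p*t1 + (1-p))^D / t1 powr (\<alpha>*D))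
      \<le> 2 powr (1 + c*d*\<Lambda>1) * real n powr (0 - c*d*\<Lambda>1 + \<theta>*(1 + c*d*\<Lambda>1))"
  proof -
    have "real k * ((p*t1 + (1-p))^D / t1 powr (\<alpha>*D)) \<le> real k * exp (- (c*d*\<Lambda>1) * ln (real n / real k))"
      using B1 K0 by (intro mult_left_mono) auto
    also have "\<dots> = real n powr 0 * real k powr 1 * exp (- (c*d*\<Lambda>1) * ln (real n / real k))"
      using K0 n0 by simp
    also have "\<dots> \<le> 2 powr (1 + c*d*\<Lambda>1) * real n powr (0 - c*d*\<Lambda>1 + \<theta>*(1 + c*d*\<Lambda>1))"
      using K0 n0 k(5) cd L1(2) by (intro pow_bound) auto
    finally show ?thesis .
  qed
  define M0 where "M0 = 1 - (1-t2)*(p + exp (-D0)*(1-2*p))"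
  define Mn where "Mn = 1 - (1-t2)*(p + \<pi>*(1-2*p))"
  have Mn0: "0 \<le> Mn"
  proof -
    have "\<pi>*(1-2*p) \<le> 1*(1-2*p)" using g(6) p by (intro mult_right_mono) auto
    moreover have "\<And>z. z \<le> 1 * (1 - 2*p) \<Longrightarrow> p + z \<le> 1" using p by simp
    ultimately have "p + \<pi>*(1-2*p) \<le> 1" by blast
    moreover have "0 \<le> p + \<pi>*(1-2*p)"
    proof -
      have "0 < exp (-D0)" by simp
      then have "0 \<le> \<pi>" using g(5) by linarith
      then have "0 \<le> \<pi>*(1-2*p)" using p by simp
      then show ?thesis using p by linarith
    qed
    ultimately have "(1-t2)*(p + \<pi>*(1-2*p)) \<le> (1-t2) * 1"
      using mult_left_mono[of "p + \<pi>*(1-2*p)" 1 "1-t2"] t by simp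
    moreover have "\<And>X. X \<le> (1-t2) * 1 \<Longrightarrow> 0 \<le> 1 - X" using t by simp
    ultimately show ?thesis unfolding Mn_def by blast
  qed
  have MnM0: "Mn \<le> M0"
  proof -
    have "exp (-D0)*(1-2*p) \<le> \<pi>*(1-2*p)" using g(5) p by (intro mult_right_mono) auto
    then have "(1-t2)*(p + exp (-D0)*(1-2*p)) \<le> (1-t2)*(p + \<pi>*(1-2*p))" using t by (intro mult_left_mono) auto
    then show ?thesis unfolding Mn_def M0_def by simp
  qed
  have M00: "0 < M0"
  proof (rule ccontr)
    assume "\<not> 0 < M0"
    have "M0 \<le> 0" using \<open>\<not> 0 < M0\<close> by simp
    then show False
    proof -
      have "exp (-D0) \<le> 1" using cd by simp
      then have "exp (-D0)*(1-2*p) \<le> 1*(1-2*p)" using p by (intro mult_right_mono) auto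
      then have "p + exp (-D0)*(1-2*p) \<le> 1 - p" by simp
      then have "(1-t2)*(p + exp (-D0)*(1-2*p)) \<le> (1-t2)*(1-p)" using t by (intro mult_left_mono) auto
      moreover have "(1-t2)*(1-p) < 1"
      proof -
        have "(1-t2)*(1-p) \<le> (1-t2)*1" using t p by (intro mult_left_mono) auto
        moreover have "\<And>X. X \<le> (1-t2)*1 \<Longrightarrow> X < 1" using t by simp
        ultimately show ?thesis by blast
      qed
      moreover have "\<And>X Y::real. X \<le> Y \<Longrightarrow> Y < 1 \<Longrightarrow> 1 - X \<le> 0 \<Longrightarrow> False" by linarith
      ultimately show False using \<open>M0 \<le> 0\<close> unfolding M0_def by blast
    qed
  qed
  have B2: "Mn^D / t2 powr (\<alpha>*D) \<le> exp (- (c*d*\<Lambda>2) * ln (real n / real k))"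
  proof -
    have "Mn^D / t2 powr (\<alpha>*D) \<le> M0^D / t2 powr (\<alpha>*D)"
      using Mn0 MnM0 t by (intro divide_right_mono power_mono) auto
    also have "\<dots> = exp (- real D * \<Lambda>2)"
      unfolding L2(1) M0_def[symmetric] using M00 t by (intro exp_form) auto
    also have "\<dots> \<le> exp (- (c*d*L) * \<Lambda>2)"
    proof -
      have "c*d*L*\<Lambda>2 \<le> real D * \<Lambda>2" using g(4) L2(2) by (intro mult_right_mono) auto
      then show ?thesis by simp
    qed
    finally show ?thesis using k(2) by (simp add: algebra_simps)
  qed
  have e2: "real (n-k) * (Mn^D / t2 powr (\<alpha>*D))
      \<le> 2 powr (0 + c*d*\<Lambda>2) * real n powr (1 - c*d*\<Lambda>2 + \<theta>*(0 + c*d*\<Lambda>2))"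
  proof -
    have "real (n-k) * (Mn^D / t2 powr (\<alpha>*D)) \<le> real n * (Mn^D / t2 powr (\<alpha>*D))"
      using Mn0 t by (intro mult_right_mono) auto
    also have "\<dots> \<le> real n * exp (- (c*d*\<Lambda>2) * ln (real n / real k))"
      using B2 n0 by (intro mult_left_mono) auto
    also have "\<dots> = real n powr 1 * real k powr 0 * exp (- (c*d*\<Lambda>2) * ln (real n / real k))"
      using K0 n0 by simp
    also have "\<dots> \<le> 2 powr (0 + c*d*\<Lambda>2) * real n powr (1 - c*d*\<Lambda>2 + \<theta>*(0 + c*d*\<Lambda>2))"
      using K0 n0 k(5) cd L2(2) by (intro pow_bound) auto
    finally show ?thesis .
  qed
  show ?thesis using mf e1 e2 unfolding Mn_def D_def[symmetric] m_def[symmetric] by linarith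
qed

theorem corollary2p11:
  fixes p \<theta> \<epsilon> c :: real
  assumes "0 < p" and "p < 1/2" and "0 < \<theta>" and "\<theta> < 1" and "0 < \<epsilon>"
    and "c > (1 + \<epsilon>) * comp_const \<theta> p"
  shows "\<exists>\<alpha> d. admissible p \<alpha> d \<and>
     (\<forall>k :: nat \<Rightarrow> nat. (\<lambda>n. real (k n)) \<sim>[at_top] (\<lambda>n. real n powr \<theta>) \<longrightarrow>
        ((\<lambda>n. success_prob n (k n)
               (nat \<lceil>c * real (k n) * ln (real n / real (k n))\<rceil>)
               (nat \<lceil>c * d * ln (real n / real (k n))\<rceil>) p \<alpha>) \<longlongrightarrow> 1) at_top)"
proof -
  obtain \<alpha> d where ad: "admissible p \<alpha> d" and c0: "0 < c"
    and H1: "\<theta> < c*(1-\<theta>)*d*DKL \<alpha> p" and H2: "1 < c*(1-\<theta>)*d*DKL \<alpha> (qd p d)"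
    using choose_ad[OF assms] by blast
  define q where "q = qd p d"
  have d0: "0 < d" and pa: "p < \<alpha>" and aq: "\<alpha> < q"
    using ad unfolding admissible_def q_def qd_def by auto
  have q01: "p < q" "q < 1" using qd_bounds[OF assms(1,2) d0] unfolding q_def by auto
  have a01: "0 < \<alpha>" "\<alpha> < 1" using pa aq q01 assms(1) by linarith+
  have p1: "p < 1" using assms(2) by simp
  define t1 where "t1 = \<alpha>*(1-p)/(p*(1-\<alpha>))"
  define t2 where "t2 = \<alpha>*(1-q)/(q*(1-\<alpha>))"
  have t1: "1 \<le> t1"
  proof -
    have "p*(1-\<alpha>) \<le> \<alpha>*(1-p)" using pa by (simp add: algebra_simps)
    then show ?thesis unfolding t1_def using assms(1) a01 by (simp add: field_simps)
  qed
  have t2: "0 < t2" "t2 < 1"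
  proof -
    show "0 < t2" unfolding t2_def using a01 q01 assms(1) by simp
    have "\<alpha>*(1-q) < q*(1-\<alpha>)" using aq by (simp add: algebra_simps)
    then show "t2 < 1" unfolding t2_def using q01 assms(1) a01 by (simp add: field_simps)
  qed
  define \<Lambda>1 where "\<Lambda>1 = \<alpha> * ln t1 - ln (p*t1 + (1-p))"
  have "\<Lambda>1 = \<alpha> * ln t1 - ln (1 - p + p*t1)"
    unfolding \<Lambda>1_def by (simp only: add.commute[of "p*t1"])
  also have "\<dots> = DKL \<alpha> p" unfolding t1_def using a01 assms(1) p1 by (intro DKL_opt) auto
  finally have L1eq: "\<Lambda>1 = DKL \<alpha> p" .
  have L1pos: "0 < \<Lambda>1" unfolding L1eq using a01 assms(1) p1 pa by (intro DKL_pos) auto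
  define Me where "Me = 1 - (1-t2)*(p + exp (-d)*(1-2*p))"
  have qeq: "p + exp (-d)*(1-2*p) = q" unfolding q_def qd_def by (simp add: algebra_simps)
  have Me_eq: "Me = 1 - q + q * t2" unfolding Me_def qeq by (simp add: algebra_simps)
  have "0 < q * t2" using q01 t2 assms(1) by simp
  then have Me0: "0 < Me" unfolding Me_eq using q01 by linarith
  have MeDKL: "\<alpha> * ln t2 - ln Me = DKL \<alpha> q"
    unfolding Me_eq t2_def using a01 q01 assms(1) by (intro DKL_opt) auto
  define \<gamma> where "\<gamma> = c*(1-\<theta>)*d"
  have g0: "0 < \<gamma>" unfolding \<gamma>_def using c0 assms(4) d0 by simp
  define \<tau> where "\<tau> = \<alpha> * ln t2 - 1/\<gamma>"
  have "1/\<gamma> < DKL \<alpha> q" using H2 g0 unfolding \<gamma>_def q_def by (simp add: field_simps)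
  then have "ln Me < \<tau>" unfolding \<tau>_def using MeDKL by linarith
  then have Me_lt: "Me < exp \<tau>" using Me0 by (metis exp_less_cancel_iff exp_ln)
  define \<kappa> where "\<kappa> = (1-t2)*(1-2*p)"
  have k0: "0 < \<kappa>" unfolding \<kappa>_def using t2 assms(2) by simp
  define \<delta> where "\<delta> = min (exp (-d)/2) ((exp \<tau> - Me)/(2*\<kappa>))"
  have del0: "0 < \<delta>" unfolding \<delta>_def using Me_lt k0 by simp
  have del1: "\<delta> \<le> exp (-d)/2" "\<delta> \<le> (exp \<tau> - Me)/(2*\<kappa>)" unfolding \<delta>_def by auto
  define \<pi>0 where "\<pi>0 = exp (-d) - \<delta>"
  have pi0: "0 < \<pi>0" "\<pi>0 < exp (-d)" unfolding \<pi>0_def using del0 del1 by (auto simp: field_simps)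
  define D0 where "D0 = - ln \<pi>0"
  have eD0: "exp (-D0) = \<pi>0" unfolding D0_def using pi0 by simp
  have dD0: "d < D0"
  proof -
    have "ln \<pi>0 < ln (exp (-d))" using pi0 by (subst ln_less_cancel_iff) auto
    then show ?thesis unfolding D0_def by simp
  qed
  define M0 where "M0 = 1 - (1-t2)*(p + exp (-D0)*(1-2*p))"
  have M0eq: "M0 = Me + \<kappa> * \<delta>" unfolding M0_def Me_def eD0 \<pi>0_def \<kappa>_def by (simp add: algebra_simps)
  have "\<kappa> * \<delta> \<le> \<kappa> * ((exp \<tau> - Me)/(2*\<kappa>))" using del1 k0 by (intro mult_left_mono) auto
  also have "\<dots> = (exp \<tau> - Me)/2" using k0 by (simp add: field_simps)
  finally have kd: "\<kappa> * \<delta> \<le> (exp \<tau> - Me)/2" .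
  have "(exp \<tau> - Me)/2 < exp \<tau> - Me" using Me_lt by (simp add: field_simps)
  then have M0_lt: "M0 < exp \<tau>" unfolding M0eq using kd by linarith
  have M00: "0 < M0" unfolding M0eq using Me0 k0 del0 by (simp add: add_pos_pos)
  define \<Lambda>2 where "\<Lambda>2 = \<alpha> * ln t2 - ln (1 - (1-t2)*(p + exp (-D0)*(1-2*p)))"
  have "ln M0 < \<tau>" using M0_lt M00 by (metis exp_less_cancel_iff exp_ln)
  then have L2gt: "1/\<gamma> < \<Lambda>2" unfolding \<Lambda>2_def M0_def[symmetric] \<tau>_def by linarith
  have "0 < 1/\<gamma>" using g0 by simp
  then have L2pos: "0 < \<Lambda>2" using L2gt by linarith
  define e1 where "e1 = 0 - c*d*\<Lambda>1 + \<theta>*(1 + c*d*\<Lambda>1)"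
  define e2 where "e2 = 1 - c*d*\<Lambda>2 + \<theta>*(0 + c*d*\<Lambda>2)"
  have e1neg: "e1 < 0"
  proof -
    have "\<theta> < c*d*\<Lambda>1*(1-\<theta>)" using H1 unfolding L1eq by (simp add: algebra_simps)
    then show ?thesis unfolding e1_def by (simp add: algebra_simps)
  qed
  have e2neg: "e2 < 0"
  proof -
    have "1 < \<gamma> * \<Lambda>2" using L2gt g0 by (simp add: field_simps)
    then have "1 < c*d*\<Lambda>2*(1-\<theta>)" unfolding \<gamma>_def by (simp add: algebra_simps)
    then show ?thesis unfolding e2_def by (simp add: algebra_simps)
  qed
  show ?thesis
  proof (intro exI conjI allI impI)
    show "admissible p \<alpha> d" by (rule ad)
    fix k :: "nat \<Rightarrow> nat"
    assume asym: "(\<lambda>n. real (k n)) \<sim>[at_top] (\<lambda>n. real n powr \<theta>)"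
    define A where "A = c*(D0-d)"
    have A0: "0 < A" unfolding A_def using c0 dD0 by simp
    define Kneed where "Kneed = max 1 (2*D0*(2*c*d+1)/A)"
    define Lneed where "Lneed = max 1 (2/A)"
    define X where "X = max 1 (max (ln (2*Kneed)/\<theta>) ((Lneed + ln 2)/(1-\<theta>)))"
    have Kn1: "1 \<le> Kneed" unfolding Kneed_def by simp
    have Ln1: "1 \<le> Lneed" unfolding Lneed_def by simp
    have ev_le: "eventually (\<lambda>n. real (k n) \<le> 2 * real n powr \<theta>) at_top"
      using asymp_equiv_imp_eventually_le[OF asym, of 2] by simp
    have ev_ge: "eventually (\<lambda>n. 1/2 * real n powr \<theta> \<le> real (k n)) at_top"
      using asymp_equiv_imp_eventually_ge[OF asym, of "1/2"] by simp
    have ev_ln: "eventually (\<lambda>n. X \<le> ln (real n)) at_top"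
    proof -
      have "eventually (\<lambda>n. nat \<lceil>exp X\<rceil> \<le> n) at_top" by (rule eventually_ge_at_top)
      then show ?thesis
      proof (rule eventually_mono)
        fix n assume "nat \<lceil>exp X\<rceil> \<le> n"
        then have "exp X \<le> real n" by linarith
        then show "X \<le> ln (real n)" by (metis exp_gt_zero ln_exp ln_le_cancel_iff order_less_le_trans)
      qed
    qed
    define LB where "LB = (\<lambda>n::nat. 1 - (2 powr (1 + c*d*\<Lambda>1) * real n powr e1
            + 2 powr (0 + c*d*\<Lambda>2) * real n powr e2))"
    let ?sp = "\<lambda>n. success_prob n (k n)
               (nat \<lceil>c * real (k n) * ln (real n / real (k n))\<rceil>)
               (nat \<lceil>c * d * ln (real n / real (k n))\<rceil>) p \<alpha>"
    have ev_good: "eventually (\<lambda>n. LB n \<le> ?sp n) at_top"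
      using ev_le ev_ge ev_ln
    proof (eventually_elim)
      case (elim n)
      have X1: "1 \<le> X" "ln (2*Kneed)/\<theta> \<le> X" "(Lneed + ln 2)/(1-\<theta>) \<le> X" unfolding X_def by auto
      have lnn: "1 \<le> ln (real n)" using elim(3) X1 by linarith
      have n0: "0 < real n"
      proof (rule ccontr)
        assume "\<not> 0 < real n"
        then have "real n = 0" by simp
        then show False using lnn by simp
      qed
      have npow: "real n powr \<theta> = exp (\<theta> * ln (real n))" using n0 by (simp add: powr_def)
      have "ln (2*Kneed) \<le> \<theta> * X" using X1(2) assms(3) by (simp add: field_simps)
      also have "\<theta> * X \<le> \<theta> * ln (real n)" using elim(3) assms(3) by (intro mult_left_mono) auto
      finally have "ln (2*Kneed) \<le> \<theta> * ln (real n)" .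
      then have "exp (ln (2*Kneed)) \<le> exp (\<theta> * ln (real n))" by simp
      then have "2*Kneed \<le> real n powr \<theta>" using Kn1 npow by simp
      moreover have "1/2 * real n powr \<theta> \<le> real (k n)" using elim(2) .
      ultimately have KK: "Kneed \<le> real (k n)" by simp
      then have k1: "1 \<le> k n" using Kn1 by simp
      have K0: "0 < real (k n)" using k1 by simp
      define L where "L = ln (real n / real (k n))"
      have "L = ln (real n) - ln (real (k n))" unfolding L_def using n0 K0 by (simp add: ln_div)
      moreover have "ln (real (k n)) \<le> ln (2 * real n powr \<theta>)"
        using elim(1) K0 n0 by (subst ln_le_cancel_iff) auto
      moreover have "ln (2 * real n powr \<theta>) = ln 2 + \<theta> * ln (real n)"
        using n0 by (simp add: ln_mult ln_powr)
      ultimately have "(1-\<theta>) * ln (real n) - ln 2 \<le> L" by (simp add: algebra_simps)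
      moreover have "Lneed + ln 2 \<le> (1-\<theta>) * ln (real n)"
      proof -
        have "Lneed + ln 2 \<le> (1-\<theta>) * X" using X1(3) assms(4) by (simp add: field_simps)
        also have "(1-\<theta>) * X \<le> (1-\<theta>) * ln (real n)" using elim(3) assms(4) by (intro mult_left_mono) auto
        finally show ?thesis .
      qed
      ultimately have LL: "Lneed \<le> L" by linarith
      have L1: "1 \<le> L" using LL Ln1 by linarith
      have hyp: "real (k n) * (c*(D0-d)*L - 1) \<ge> D0*(2*c*d*L + 1)"
      proof -
        have "2/A \<le> L" using LL unfolding Lneed_def by simp
        then have AL: "2 \<le> A*L" using A0 by (simp add: field_simps)
        have "2*D0*(2*c*d+1)/A \<le> real (k n)" using KK unfolding Kneed_def by simp
        then have KA: "2*D0*(2*c*d+1) \<le> real (k n) * A" using A0 by (simp add: field_simps)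
        have "D0*(2*c*d*L + 1) \<le> D0*(2*c*d*L + L)" using L1 dD0 d0 by simp
        also have "\<dots> = L * (D0*(2*c*d+1))" by (simp add: algebra_simps)
        also have "\<dots> \<le> L * (real (k n) * A / 2)" using KA L1 by (intro mult_left_mono) auto
        also have "\<dots> = real (k n) * (A*L/2)" by (simp add: algebra_simps)
        also have "\<dots> \<le> real (k n) * (A*L - 1)" using AL K0 by (intro mult_left_mono) auto
        finally show ?thesis unfolding A_def by simp
      qed
      have "LB n \<le> success_prob n (k n) (nat \<lceil>c * real (k n) * L\<rceil>) (nat \<lceil>c * d * L\<rceil>) p \<alpha>"
        unfolding LB_def e1_def e2_def
      proof (rule per_n[OF assms(1,2) t1 t2 c0 d0 dD0 _ \<Lambda>1_def L1pos \<Lambda>2_def L2pos k1 L_def L1 hyp elim(1)])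
        show "0 \<le> \<theta>" using assms(3) by simp
      qed
      then show ?case unfolding L_def .
    qed
    have ev_up: "eventually (\<lambda>n. ?sp n \<le> 1) at_top"
      by (intro always_eventually allI) (simp add: success_prob_def measure_pmf.prob_le_1)
    have lim: "(LB \<longlongrightarrow> 1) at_top"
    proof -
      have "((\<lambda>n. real n powr e1) \<longlongrightarrow> 0) at_top"
        by (rule tendsto_neg_powr[OF e1neg filterlim_real_sequentially])
      moreover have "((\<lambda>n. real n powr e2) \<longlongrightarrow> 0) at_top"
        by (rule tendsto_neg_powr[OF e2neg filterlim_real_sequentially])
      ultimately have "(LB \<longlongrightarrow> 1 - (2 powr (1 + c*d*\<Lambda>1) * 0 + 2 powr (0 + c*d*\<Lambda>2) * 0)) at_top"
        unfolding LB_def by (intro tendsto_intros)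
      then show ?thesis by simp
    qed
    show "(?sp \<longlongrightarrow> 1) at_top"
      by (rule tendsto_sandwich[OF ev_good ev_up lim tendsto_const])
  qed
qed

end
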